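(* Let $p\ge1$ and $0<\nu\le1/2$. Then $$\sup_{0<y<(2+\nu/p^2)\,\omega_{p,\nu}}\left|\frac{1-y^{-1}P_{p,\nu}(y)}{P_{p,\nu}(y)}\right|\le\frac{\nu+1}{2\nu}.$$
   Context: $T_p$ denotes the Chebyshev polynomial of the first kind of degree $p$. $\delta_{p,\nu}:=1+\nu/p^2$, $\omega_{p,\nu}:=2T_p'(\delta_{p,\nu})/T_p(\delta_{p,\nu})$, and $P_{p,\nu}(x):=2\big(1-T_p(\delta_{p,\nu}-x/\omega_{p,\nu})/T_p(\delta_{p,\nu})\big)$. *)

theory Defs
  imports "HOL-Analysis.Analysis"
begin

fun cheb_T :: "nat \<Rightarrow> real \<Rightarrow> real" where
  "cheb_T 0 x = 1"
| "cheb_T (Suc 0) x = x"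
| "cheb_T (Suc (Suc n)) x = 2 * x * cheb_T (Suc n) x - cheb_T n x"

definition delta_pn :: "nat \<Rightarrow> real \<Rightarrow> real" where
  "delta_pn p \<nu> = 1 + \<nu> / (real p)^2"

definition omega_pn :: "nat \<Rightarrow> real \<Rightarrow> real" where
  "omega_pn p \<nu> = 2 * deriv (cheb_T p) (delta_pn p \<nu>) / cheb_T p (delta_pn p \<nu>)"

definition P_pn :: "nat \<Rightarrow> real \<Rightarrow> real \<Rightarrow> real" where
  "P_pn p \<nu> x = 2 * (1 - cheb_T p (delta_pn p \<nu> - x / omega_pn p \<nu>) / cheb_T p (delta_pn p \<nu>))"

end

theory Submission
  imports Defs
begin

fun cheb_U :: "nat \<Rightarrow> real \<Rightarrow> real" where
  "cheb_U 0 x = 1"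
| "cheb_U (Suc 0) x = 2 * x"
| "cheb_U (Suc (Suc n)) x = 2 * x * cheb_U (Suc n) x - cheb_U n x"

fun cheb_V :: "nat \<Rightarrow> real \<Rightarrow> real" where
  "cheb_V 0 x = 0"
| "cheb_V (Suc 0) x = 2"
| "cheb_V (Suc (Suc n)) x = cheb_V n x + 2 * real (Suc (Suc n)) * cheb_U (Suc n) x"

lemma two_induct: "P 0 \<Longrightarrow> P (Suc 0) \<Longrightarrow> (\<And>n. P n \<Longrightarrow> P (Suc n) \<Longrightarrow> P (Suc (Suc n))) \<Longrightarrow> P n"
proof -
  assume a: "P 0" "P (Suc 0)" "\<And>n. P n \<Longrightarrow> P (Suc n) \<Longrightarrow> P (Suc (Suc n))"
  have "P n \<and> P (Suc n)" by (induction n) (auto intro: a)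
  then show "P n" by simp
qed

lemma UT: "cheb_U (Suc n) x = x * cheb_U n x + cheb_T (Suc n) x"
proof (induction n rule: two_induct)
  case 1 then show ?case by simp
next
  case 2 then show ?case by (simp add: algebra_simps power2_eq_square)
next
  case (3 n)
  have u3: "cheb_U (Suc (Suc (Suc n))) x = 2*x*cheb_U (Suc (Suc n)) x - cheb_U (Suc n) x"
    by (rule cheb_U.simps(3))
  have t3: "cheb_T (Suc (Suc (Suc n))) x = 2*x*cheb_T (Suc (Suc n)) x - cheb_T (Suc n) x"
    by (rule cheb_T.simps(3))
  have u2: "cheb_U (Suc (Suc n)) x = 2*x*cheb_U (Suc n) x - cheb_U n x"
    by (rule cheb_U.simps(3))
  have t2: "cheb_T (Suc (Suc n)) x = cheb_U (Suc (Suc n)) x - x * cheb_U (Suc n) x"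
    using 3(2) by simp
  have t1: "cheb_T (Suc n) x = cheb_U (Suc n) x - x * cheb_U n x"
    using 3(1) by simp
  show ?case unfolding u3 t3 t2 t1 u2 by (simp add: algebra_simps)
qed

lemma TU: "cheb_T (Suc (Suc n)) x = x * cheb_U (Suc n) x - cheb_U n x"
proof -
  have "cheb_T (Suc (Suc n)) x = cheb_U (Suc (Suc n)) x - x * cheb_U (Suc n) x"
    using UT[of "Suc n" x] by simp
  also have "\<dots> = x * cheb_U (Suc n) x - cheb_U n x"
    by (simp add: algebra_simps)
  finally show ?thesis .
qed

lemma UU: "cheb_U (Suc (Suc n)) x = cheb_U n x + 2 * cheb_T (Suc (Suc n)) x"
  unfolding TU by (simp only: cheb_U.simps(3)) (simp add: algebra_simps)

lemma DT: "DERIV (cheb_T (Suc n)) x :> real (Suc n) * cheb_U n x"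
proof (induction n rule: two_induct)
  case 1
  have "cheb_T (Suc 0) = (\<lambda>x. x)" by (rule ext) simp
  then show ?case by (simp del: cheb_T.simps)
next
  case 2
  have e: "cheb_T (Suc (Suc 0)) = (\<lambda>x. 2 * x * x - 1)" by (rule ext) simp
  have "((\<lambda>x. 2 * x * x - 1) has_real_derivative (2 * 1 * x + 2 * x * 1 - 0)) (at x)"
    by (auto intro!: derivative_eq_intros)
  then show ?case by (simp add: e algebra_simps)
next
  case (3 n)
  have e: "cheb_T (Suc (Suc (Suc n))) = (\<lambda>x. 2 * x * cheb_T (Suc (Suc n)) x - cheb_T (Suc n) x)"
    by (rule ext) (rule cheb_T.simps(3))
  have d1: "DERIV (\<lambda>x. 2 * x) x :> 2" by (intro derivative_eq_intros) auto
  have X: "DERIV (\<lambda>x. 2 * x * cheb_T (Suc (Suc n)) x - cheb_T (Suc n) x) x :>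
     (2 * x * (real (Suc (Suc n)) * cheb_U (Suc n) x) + 2 * cheb_T (Suc (Suc n)) x
       - real (Suc n) * cheb_U n x)"
    by (rule DERIV_diff[OF DERIV_mult'[OF d1 3(2)] 3(1)])
  have eq: "2 * x * (real (Suc (Suc n)) * cheb_U (Suc n) x) + 2 * cheb_T (Suc (Suc n)) x
       - real (Suc n) * cheb_U n x = real (Suc (Suc (Suc n))) * cheb_U (Suc (Suc n)) x"
    unfolding TU cheb_U.simps(3) by (simp add: algebra_simps)
  show ?case unfolding e eq[symmetric] by (rule X)
qed

lemma DU: "DERIV (cheb_U n) x :> cheb_V n x"
proof (induction n rule: two_induct)
  case 1
  have "cheb_U 0 = (\<lambda>x. 1)" by (rule ext) simp
  then show ?case by simp
next
  case 2
  have e: "cheb_U (Suc 0) = (\<lambda>x. 2 * x)" by (rule ext) simp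
  have "((\<lambda>x. 2 * x) has_real_derivative (2 * 1)) (at x)"
    by (auto intro!: derivative_eq_intros)
  then show ?case by (simp add: e)
next
  case (3 n)
  have e: "cheb_U (Suc (Suc n)) = (\<lambda>x. cheb_U n x + 2 * cheb_T (Suc (Suc n)) x)"
    by (rule ext) (rule UU)
  have X: "DERIV (\<lambda>x. cheb_U n x + 2 * cheb_T (Suc (Suc n)) x) x :>
     (cheb_V n x + 2 * (real (Suc (Suc n)) * cheb_U (Suc n) x))"
    by (rule DERIV_add[OF 3(1) DERIV_cmult[OF DT[of "Suc n" x]]])
  have eq: "cheb_V n x + 2 * (real (Suc (Suc n)) * cheb_U (Suc n) x) = cheb_V (Suc (Suc n)) x"
    by (simp only: cheb_V.simps(3))
  show ?case unfolding e eq[symmetric] by (rule X)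
qed

lemma T_one: "cheb_T n 1 = 1"
  by (induction n rule: two_induct) auto

lemma U_one: "cheb_U n 1 = real n + 1"
  by (induction n rule: two_induct) auto

lemma T_cos: "cheb_T n (cos t) = cos (real n * t)"
proof (induction n rule: two_induct)
  case (3 n)
  have k: "cos (a + b) + cos (a - b) = 2 * cos a * cos b" for a b :: real
    by (simp add: cos_add cos_diff)
  have "cos (real (Suc (Suc n)) * t) = cos ((real (Suc n)) * t + t)" by (simp add: algebra_simps)
  moreover have "cos (real n * t) = cos ((real (Suc n)) * t - t)" by (simp add: algebra_simps)
  moreover have "cheb_T (Suc (Suc n)) (cos t) = 2 * cos t * cheb_T (Suc n) (cos t) - cheb_T n (cos t)"
    by (rule cheb_T.simps(3))
  ultimately show ?case using 3 k[of "real (Suc n) * t" t] by (simp only:) (simp add: algebra_simps)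
qed auto

lemma T_bound: "-1 \<le> x \<Longrightarrow> x \<le> 1 \<Longrightarrow> \<bar>cheb_T n x\<bar> \<le> 1"
  using T_cos[of n "arccos x"] by (simp add: cos_arccos)

lemma U_bound: "-1 \<le> x \<Longrightarrow> x \<le> 1 \<Longrightarrow> \<bar>cheb_U n x\<bar> \<le> real n + 1"
proof (induction n)
  case 0 then show ?case by simp
next
  case (Suc n)
  have "\<bar>x * cheb_U n x\<bar> \<le> 1 * (real n + 1)"
    unfolding abs_mult using Suc by (intro mult_mono) auto
  then show ?case using UT[of n x] T_bound[of x "Suc n"] Suc by (simp add: abs_le_iff)
qed

lemma U_ge: "1 \<le> x \<Longrightarrow> 1 \<le> cheb_U n x \<and> cheb_U n x \<le> cheb_U (Suc n) x"
proof (induction n)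
  case 0 then show ?case by simp
next
  case (Suc n)
  have a: "0 \<le> (2 * x - 2) * cheb_U (Suc n) x" using Suc by simp
  have b: "2 * x * cheb_U (Suc n) x - 2 * cheb_U (Suc n) x = (2 * x - 2) * cheb_U (Suc n) x"
    by (simp add: algebra_simps)
  have c: "cheb_U (Suc (Suc n)) x = 2 * x * cheb_U (Suc n) x - cheb_U n x" by simp
  show ?case using Suc a b c by linarith
qed

lemma U_mono_idx: "1 \<le> x \<Longrightarrow> n \<le> m \<Longrightarrow> cheb_U n x \<le> cheb_U m x"
proof -
  assume x: "1 \<le> x" and nm: "n \<le> m"
  have st: "\<And>k. cheb_U k x \<le> cheb_U (Suc k) x" using U_ge[OF x] by blast
  show ?thesis using lift_Suc_mono_le[of "\<lambda>k. cheb_U k x", OF st nm] by simp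
qed

lemma V_nonneg: "1 \<le> x \<Longrightarrow> 0 \<le> cheb_V n x"
proof (induction n rule: two_induct)
  case (3 n)
  have "0 \<le> cheb_U (Suc n) x" using U_ge[OF 3(3), of "Suc n"] by linarith
  then show ?case using 3 by simp
qed auto

lemma V_bound: "1 \<le> x \<Longrightarrow> 2 * cheb_V n x \<le> real n * (real n + 2) * cheb_U n x"
proof (induction n rule: two_induct)
  case 1 then show ?case by simp
next
  case 2 then show ?case by simp
next
  case (3 n)
  have a1: "cheb_U n x \<le> cheb_U (Suc (Suc n)) x" using U_mono_idx[OF 3(3), of n "Suc (Suc n)"] by simp
  have a2: "cheb_U (Suc n) x \<le> cheb_U (Suc (Suc n)) x" using U_ge[OF 3(3), of "Suc n"] by simp
  have b: "real n * (real n + 2) * cheb_U n x \<le> real n * (real n + 2) * cheb_U (Suc (Suc n)) x"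
    using a1 by (intro mult_left_mono) auto
  have c: "4 * (real n + 2) * cheb_U (Suc n) x \<le> 4 * (real n + 2) * cheb_U (Suc (Suc n)) x"
    using a2 by (intro mult_left_mono) auto
  have i: "2 * cheb_V n x \<le> real n * (real n + 2) * cheb_U n x" using 3 by simp
  have e: "2 * cheb_V (Suc (Suc n)) x = 2 * cheb_V n x + 4 * (real n + 2) * cheb_U (Suc n) x"
    by (simp only: cheb_V.simps(3)) (simp add: algebra_simps)
  have f: "real (Suc (Suc n)) * (real (Suc (Suc n)) + 2) * cheb_U (Suc (Suc n)) x
     = real n * (real n + 2) * cheb_U (Suc (Suc n)) x + 4 * (real n + 2) * cheb_U (Suc (Suc n)) x"
    by (simp add: algebra_simps)
  show ?case unfolding e f using i b c by linarith
qed

lemma U_mono: "1 \<le> a \<Longrightarrow> a \<le> b \<Longrightarrow> cheb_U n a \<le> cheb_U n b"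
proof (cases "a = b")
  case False
  assume h: "1 \<le> a" "a \<le> b"
  then have "a < b" using False by simp
  then obtain z where "a < z" "z < b" "cheb_U n b - cheb_U n a = (b - a) * cheb_V n z"
    using MVT2[of a b "cheb_U n" "cheb_V n"] DU by blast
  moreover have "0 \<le> cheb_V n z" using V_nonneg h \<open>a < z\<close> by simp
  ultimately show ?thesis using \<open>a < b\<close> by (smt (verit) mult_nonneg_nonneg)
qed simp

lemma U_absbound: "-1 \<le> x \<Longrightarrow> x \<le> d \<Longrightarrow> 1 \<le> d \<Longrightarrow> \<bar>cheb_U n x\<bar> \<le> cheb_U n d"
proof (cases "x \<ge> 1")
  case True
  assume "x \<le> d"
  then show ?thesis using True U_mono[of x d n] U_ge[of x n] by simp
next
  case False
  assume "-1 \<le> x" "1 \<le> d"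
  then show ?thesis using U_bound[of x n] U_mono[of 1 d n] U_one[of n] False by simp
qed


lemma arith1:
  fixes A s B f \<nu> :: real
  assumes "\<nu> > 0" "A - 1 \<ge> \<nu>" "A - 1 \<le> f" "f \<le> s * B" "s * B > 0"
  shows "\<bar>A * (s * B - f) / (2 * f * (s * B))\<bar> \<le> (\<nu> + 1) / (2 * \<nu>)"
proof -
  have f0: "f > 0" using assms by linarith
  have A0: "A > 0" using assms by linarith
  have e: "A * (s * B - f) / (2 * f * (s * B)) = (A / (2 * f)) * ((s * B - f) / (s * B))"
    by (simp add: field_simps)
  have q0: "0 \<le> (s * B - f) / (s * B)" using assms by simp
  have q1: "(s * B - f) / (s * B) \<le> 1" using assms f0 by (simp add: divide_simps)
  have r0: "0 \<le> A / (2 * f)" using A0 f0 by simp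
  have "A / (2 * f) \<le> A / (2 * (A - 1))"
    using assms A0 by (intro divide_left_mono) auto
  also have "\<dots> \<le> (\<nu> + 1) / (2 * \<nu>)"
  proof -
    have "A * (2 * \<nu>) \<le> (\<nu> + 1) * (2 * (A - 1))" using assms by (simp add: algebra_simps)
    then show ?thesis using assms by (simp add: divide_simps)
  qed
  finally have r1: "A / (2 * f) \<le> (\<nu> + 1) / (2 * \<nu>)" .
  have "0 \<le> (A / (2 * f)) * ((s * B - f) / (s * B))" by (rule mult_nonneg_nonneg[OF r0 q0])
  moreover have "(A / (2 * f)) * ((s * B - f) / (s * B)) \<le> A / (2 * f)"
    using mult_left_mono[OF q1 r0] by simp
  ultimately show ?thesis unfolding e using r1 by (simp add: abs_of_nonneg)
qed

lemma arith2:
  fixes A s B f \<nu> q :: real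
  assumes "\<nu> > 0" "\<nu> \<le> 1/2" "A > 0" "A \<le> 5/3" "s > 0" "B > 0" "q > 0" "f \<ge> s * q"
    "f \<le> s * B" "s * B - f \<le> s^2 * q * B / 2"
  shows "\<bar>A * (s * B - f) / (2 * f * (s * B))\<bar> \<le> (\<nu> + 1) / (2 * \<nu>)"
proof -
  have f0: "f > 0" using assms by (smt (verit) mult_pos_pos)
  have sB: "s * B > 0" using assms by simp
  have n: "0 \<le> A * (s * B - f) / (2 * f * (s * B))" using assms f0 sB by simp
  have "A * (s * B - f) \<le> A * (s^2 * q * B / 2)" using assms by (intro mult_left_mono) auto
  also have "\<dots> \<le> A / 2 * ((s * q) * (s * B))" by (simp add: power2_eq_square algebra_simps)
  also have "\<dots> \<le> A / 2 * (f * (s * B))" using assms sB by (intro mult_left_mono mult_right_mono) auto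
  finally have "A * (s * B - f) \<le> A / 2 * (f * (s * B))" .
  moreover have "A / 4 * (2 * f * (s * B)) = A / 2 * (f * (s * B))" by simp
  ultimately have c: "A * (s * B - f) \<le> A / 4 * (2 * f * (s * B))" by linarith
  have pos: "0 < 2 * f * (s * B)" using f0 sB by simp
  have "A * (s * B - f) / (2 * f * (s * B)) \<le> A / 4" using c pos by (simp only: pos_divide_le_eq)
  also have "\<dots> \<le> (\<nu> + 1) / (2 * \<nu>)"
  proof -
    have "A * \<nu> \<le> 5/3 * \<nu>" using assms by (intro mult_right_mono) auto
    then have "A / 4 * (2 * \<nu>) \<le> (\<nu> + 1)" using assms(1,2) by linarith
    then show ?thesis using assms by (simp add: divide_simps)
  qed
  finally show ?thesis using n by simp
qed
theorem lemmaA5: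
  fixes p :: nat and \<nu> :: real
  assumes "p \<ge> 1" and "0 < \<nu>" and "\<nu> \<le> 1/2"
  shows "\<forall>y. 0 < y \<and> y < (2 + \<nu> / (real p)^2) * omega_pn p \<nu> \<longrightarrow>
            \<bar>(1 - P_pn p \<nu> y / y) / P_pn p \<nu> y\<bar> \<le> (\<nu> + 1) / (2 * \<nu>)"
proof (intro allI impI)
  fix y assume y: "0 < y \<and> y < (2 + \<nu> / (real p)^2) * omega_pn p \<nu>"
  obtain n where pn: "p = Suc n" using assms(1) by (cases p) auto
  define d where "d = delta_pn p \<nu>"
  define A where "A = cheb_T p d"
  define B where "B = real p * cheb_U n d"
  have pp: "real p \<ge> 1" using assms(1) by simp
  have p2: "(real p)^2 > 0" using pp by simp
  have d1: "d - 1 = \<nu> / (real p)^2" unfolding d_def delta_pn_def by simp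
  have dg: "d > 1" using d1 p2 assms(2) by (smt (verit) divide_pos_pos)
  have np: "real n + 1 = real p" using pn by simp
  have dT: "\<And>z. DERIV (cheb_T p) z :> real p * cheb_U n z" using DT[of n] pn by simp
  have derivT: "deriv (cheb_T p) d = B" unfolding B_def by (rule DERIV_imp_deriv[OF dT])
  have om: "omega_pn p \<nu> = 2 * B / A"
    unfolding omega_pn_def A_def d_def[symmetric] derivT by simp
  have Ud: "cheb_U n d \<ge> real p" using U_mono[of 1 d n] U_one[of n] dg np by simp
  obtain \<xi>1 where x1: "1 < \<xi>1" "\<xi>1 < d" "A - 1 = (d - 1) * (real p * cheb_U n \<xi>1)"
    using MVT2[of 1 d "cheb_T p" "\<lambda>z. real p * cheb_U n z", OF dg dT] T_one[of p]
    unfolding A_def by auto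
  have Ux1: "cheb_U n \<xi>1 \<ge> real p" using U_mono[of 1 \<xi>1 n] U_one[of n] x1 np by simp
  have Ux1': "cheb_U n \<xi>1 \<le> cheb_U n d" using U_mono[of \<xi>1 d n] x1 by simp
  have "(d - 1) * (real p * real p) \<le> (d - 1) * (real p * cheb_U n \<xi>1)"
    using Ux1 dg pp by (intro mult_left_mono) auto
  moreover have "(d - 1) * (real p * real p) = \<nu>" using d1 pp by (simp add: power2_eq_square)
  ultimately have A1: "A - 1 \<ge> \<nu>" using x1 by simp
  obtain \<zeta> where z1: "1 < \<zeta>" "\<zeta> < d" "cheb_U n d - cheb_U n 1 = (d - 1) * cheb_V n \<zeta>"
    using MVT2[of 1 d "cheb_U n" "cheb_V n", OF dg DU] by blast
  have "2 * cheb_V n \<zeta> \<le> real n * (real n + 2) * cheb_U n \<zeta>" using V_bound z1 by simp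
  also have "\<dots> \<le> (real p)^2 * cheb_U n \<zeta>"
    using U_ge[of \<zeta> n] z1(1) by (intro mult_right_mono) (auto simp: power2_eq_square algebra_simps np[symmetric])
  also have "\<dots> \<le> (real p)^2 * cheb_U n d" using U_mono[of \<zeta> d n] z1(1,2) by (intro mult_left_mono) auto
  finally have Vz: "2 * cheb_V n \<zeta> \<le> (real p)^2 * cheb_U n d" .
  have "(d - 1) * (2 * cheb_V n \<zeta>) \<le> (d - 1) * ((real p)^2 * cheb_U n d)"
    using Vz dg by (intro mult_left_mono) auto
  also have "\<dots> = \<nu> * cheb_U n d" using d1 pp by simp
  finally have "2 * (cheb_U n d - real p) \<le> \<nu> * cheb_U n d" using z1 U_one[of n] np by simp
  moreover have "\<nu> * cheb_U n d \<le> 1/2 * cheb_U n d" using assms Ud pp by (intro mult_right_mono) auto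
  ultimately have Ud2: "cheb_U n d \<le> 4/3 * real p" by (simp add: field_simps)
  have "(d - 1) * (real p * cheb_U n \<xi>1) \<le> (d - 1) * (real p * cheb_U n d)"
    using Ux1' dg pp by (intro mult_left_mono) auto
  then have "A - 1 \<le> (d - 1) * (real p * cheb_U n d)" using x1(3) by simp
  also have "\<dots> \<le> (d - 1) * (real p * (4/3 * real p))"
    using Ud2 dg pp by (intro mult_left_mono) auto
  also have "\<dots> = 4/3 * \<nu>" using d1 pp by (simp add: power2_eq_square)
  finally have A2: "A \<le> 5/3" using assms by linarith
  have A0: "A > 1" using A1 assms by linarith
  have B0: "B \<ge> (real p)^2" unfolding B_def power2_eq_square using Ud pp by (intro mult_left_mono) auto
  have Bp: "B > 0" using B0 p2 by linarith
  have om0: "omega_pn p \<nu> > 0" using om A0 Bp by simp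
  define s where "s = y / omega_pn p \<nu>"
  define t where "t = d - s"
  have s0: "s > 0" unfolding s_def using y om0 by simp
  have "s < 2 + \<nu> / (real p)^2" unfolding s_def using y om0 by (simp add: divide_less_eq)
  then have tm1: "t > -1" unfolding t_def using d1 by simp
  have td: "t < d" unfolding t_def using s0 by simp
  have yeq: "y = 2 * s * B / A" unfolding s_def om using A0 Bp by simp
  define f where "f = A - cheb_T p t"
  have "P_pn p \<nu> y = 2 * (1 - cheb_T p t / A)"
    unfolding P_pn_def t_def s_def A_def d_def by simp
  also have "\<dots> = 2 * f / A" unfolding f_def using A0 by (simp add: field_simps)
  finally have Peq: "P_pn p \<nu> y = 2 * f / A" .
  obtain \<xi> where x: "t < \<xi>" "\<xi> < d" "A - cheb_T p t = (d - t) * (real p * cheb_U n \<xi>)"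
    using MVT2[of t d "cheb_T p" "\<lambda>z. real p * cheb_U n z", OF td dT]
    unfolding A_def by auto
  have feq: "f = s * (real p * cheb_U n \<xi>)" using x unfolding f_def t_def by simp
  have "real p * cheb_U n \<xi> \<le> B" unfolding B_def
    using U_absbound[of \<xi> d n] x tm1 dg pp by (intro mult_left_mono) auto
  then have fsB: "f \<le> s * B" unfolding feq using s0 by (intro mult_left_mono) auto
  have sB: "s * B > 0" using s0 Bp by simp
  have expr: "(1 - P_pn p \<nu> y / y) / P_pn p \<nu> y = A * (s * B - f) / (2 * f * (s * B))"
    if "f \<noteq> 0" unfolding Peq unfolding yeq using that A0 Bp s0 by (simp add: field_simps)
  show "\<bar>(1 - P_pn p \<nu> y / y) / P_pn p \<nu> y\<bar> \<le> (\<nu> + 1) / (2 * \<nu>)"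
  proof (cases "t < 1")
    case True
    have "cheb_T p t \<le> 1" using T_bound[of t p] True tm1 by simp
    then have "A - 1 \<le> f" unfolding f_def by simp
    then show ?thesis using expr arith1[of \<nu> A f s B] A1 fsB sB assms by force
  next
    case False
    have Uxi: "cheb_U n \<xi> \<ge> real p" using U_mono[of 1 \<xi> n] U_one[of n] x False np by simp
    have fl: "f \<ge> s * (real p)^2" unfolding feq power2_eq_square
      using Uxi s0 pp by (intro mult_left_mono) auto
    obtain \<zeta>2 where z2: "\<xi> < \<zeta>2" "\<zeta>2 < d" "cheb_U n d - cheb_U n \<xi> = (d - \<xi>) * cheb_V n \<zeta>2"
      using MVT2[of \<xi> d "cheb_U n" "cheb_V n", OF x(2) DU] by blast
    have g1: "1 \<le> \<zeta>2" using z2 x False by simp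
    have "2 * cheb_V n \<zeta>2 \<le> real n * (real n + 2) * cheb_U n \<zeta>2" using V_bound g1 by simp
    also have "\<dots> \<le> (real p)^2 * cheb_U n \<zeta>2"
      using U_ge[of \<zeta>2 n] g1 by (intro mult_right_mono) (auto simp: power2_eq_square algebra_simps np[symmetric])
    also have "\<dots> \<le> (real p)^2 * cheb_U n d" using U_mono[of \<zeta>2 d n] z2(2) g1 by (intro mult_left_mono) auto
    finally have Vz2: "cheb_V n \<zeta>2 \<le> (real p)^2 * cheb_U n d / 2" by simp
    have V0: "0 \<le> cheb_V n \<zeta>2" using V_nonneg g1 by simp
    have ds: "d - \<xi> \<le> s" using x unfolding t_def by simp
    have "cheb_U n d - cheb_U n \<xi> \<le> s * ((real p)^2 * cheb_U n d / 2)"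
      unfolding z2(3) using ds Vz2 V0 x by (intro mult_mono) auto
    then have pr: "real p * (cheb_U n d - cheb_U n \<xi>) \<le> real p * (s * ((real p)^2 * cheb_U n d / 2))"
      using pp by (intro mult_left_mono) auto
    have "s * (real p * (cheb_U n d - cheb_U n \<xi>)) \<le> s * (real p * (s * ((real p)^2 * cheb_U n d / 2)))"
      using mult_left_mono[OF pr, of s] s0 by simp
    moreover have "s * B - f = s * (real p * (cheb_U n d - cheb_U n \<xi>))"
      unfolding feq B_def by (simp add: algebra_simps)
    moreover have "s * (real p * (s * ((real p)^2 * cheb_U n d / 2))) = s^2 * (real p)^2 * B / 2"
      unfolding B_def by (simp add: power2_eq_square algebra_simps)
    ultimately have key: "s * B - f \<le> s^2 * (real p)^2 * B / 2" by linarith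
    have "f \<noteq> 0" using fl s0 p2 by (smt (verit) mult_pos_pos)
    then show ?thesis using expr arith2[of \<nu> A s B "(real p)^2" f] assms A0 A2 s0 Bp p2 fl fsB key
      by simp
  qed
qed

end
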